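(* Let $L$ be a probability measure on $\mathbb{N}$ and $F:\mathbb{N}\to\mathbb{N}$ a function with $\max_ic_i\le F(n)$ for all $n\in\mathbb{N}$. Define $\mathbf g=(g_1,\dots,g_D):[0,1]^D\times\mathcal S\to\mathbb{R}^D$ by $$g_i(\mathbf x,\tau,a,u)=\frac{1}{F(\tau)}\Big[\sum_{j=1}^D\sum_{m=1}^\infty a_{jm}\mathbf 1_{\{u_{jm}\le x_j\}}\Big]-x_i .$$ Then there is a constant $K_c$ such that for all $\mathbf x,\mathbf z\in[0,1]^D$ and all $i=1,\dots,D$, $$\int_{\mathcal S}|g_i(\mathbf z,\tau,a,u)-g_i(\mathbf x,\tau,a,u)|\,\mathfrak A^{(i)}(d\tau,da)\,du\le K_c\|\mathbf x-\mathbf z\|.$$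
   Context: $D\in\mathbb{N}$; $c_{ij}\in\mathbb{N}_0$ ($i\ne j$) with $c_i:=\sum_{j\ne i}c_{ij}=\sum_{j\ne i}c_{ji}$. $\mathcal S=\mathbb{N}_0\times\mathbb{N}_0^{D\times\mathbb{N}}\times[0,1]^{D\times\mathbb{N}}$, $du$ is the product uniform (Lebesgue) measure on $[0,1]^{D\times\mathbb{N}}$, $\|\cdot\|$ the Euclidean norm, and $\mathfrak A^{(i)}(d\tau,da)=L(d\tau)A^{(i)}(\tau,da)$ where $A^{(i)}(\tau,\cdot)$ is the law of $(a_{jm}(\tau))_{j,m}$ for the Markov chain over $r=1,\dots,\tau$: $a_{im}(1)=1$ for $m\le F(1)-c_i$ (else $0$), for $j\ne i$ $a_{jm}(1)=1$ for $m\le c_{ji}$ (else $0$); from $r$ to $r+1$ each of $F(r+1)-c_i$ individuals independently picks family $(j,m)$ with probability $a_{jm}(r)/F(r)$, existing family sizes become the numbers of picks, and for each $j\ne i$ new families $a_{jm}(r+1)=1$, $c_{ji}r<m\le c_{ji}(r+1)$, are added. *)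

theory Defs
  imports "HOL-Probability.Probability"
begin

text \<open>Types are indexed by 1..D; families are pairs (j,m) with j in 1..D, m >= 1.
A state a is represented as a multiset of families: count a (j,m) = a_jm.\<close>

definition csum :: "nat \<Rightarrow> (nat \<Rightarrow> nat \<Rightarrow> nat) \<Rightarrow> nat \<Rightarrow> nat" where
  "csum D c i = (\<Sum>j\<in>{1..D} - {i}. c i j)"

primrec picks :: "'a multiset \<Rightarrow> nat \<Rightarrow> 'a multiset pmf" where
  "picks M 0 = return_pmf {#}"
| "picks M (Suc n) = bind_pmf (pmf_of_multiset M) (\<lambda>x. map_pmf (add_mset x) (picks M n))"

definition init_state :: "nat \<Rightarrow> (nat \<Rightarrow> nat \<Rightarrow> nat) \<Rightarrow> (nat \<Rightarrow> nat) \<Rightarrow> nat \<Rightarrow> (nat \<times> nat) multiset" where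
  "init_state D c F i = mset_set ({i} \<times> {1..F 1 - csum D c i})
      + mset_set (\<Union>j\<in>{1..D} - {i}. {j} \<times> {1..c j i})"

definition new_families :: "nat \<Rightarrow> (nat \<Rightarrow> nat \<Rightarrow> nat) \<Rightarrow> nat \<Rightarrow> nat \<Rightarrow> (nat \<times> nat) multiset" where
  "new_families D c i r = mset_set (\<Union>j\<in>{1..D} - {i}. {j} \<times> {c j i * r <.. c j i * (r + 1)})"

definition step :: "nat \<Rightarrow> (nat \<Rightarrow> nat \<Rightarrow> nat) \<Rightarrow> (nat \<Rightarrow> nat) \<Rightarrow> nat \<Rightarrow> nat
    \<Rightarrow> (nat \<times> nat) multiset \<Rightarrow> (nat \<times> nat) multiset pmf" where
  "step D c F i r M = map_pmf (\<lambda>N. N + new_families D c i r) (picks M (F (r + 1) - csum D c i))"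

text \<open>famproc D c F i k is the law of the state at time r = k+1.\<close>
primrec famproc :: "nat \<Rightarrow> (nat \<Rightarrow> nat \<Rightarrow> nat) \<Rightarrow> (nat \<Rightarrow> nat) \<Rightarrow> nat \<Rightarrow> nat
    \<Rightarrow> (nat \<times> nat) multiset pmf" where
  "famproc D c F i 0 = return_pmf (init_state D c F i)"
| "famproc D c F i (Suc k) = bind_pmf (famproc D c F i k) (step D c F i (Suc k))"

definition Achain :: "nat \<Rightarrow> (nat \<Rightarrow> nat \<Rightarrow> nat) \<Rightarrow> (nat \<Rightarrow> nat) \<Rightarrow> nat \<Rightarrow> nat
    \<Rightarrow> (nat \<times> nat) multiset pmf" where
  "Achain D c F i \<tau> = famproc D c F i (\<tau> - 1)"

definition Afrak :: "nat pmf \<Rightarrow> nat \<Rightarrow> (nat \<Rightarrow> nat \<Rightarrow> nat) \<Rightarrow> (nat \<Rightarrow> nat) \<Rightarrow> nat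
    \<Rightarrow> (nat \<times> (nat \<times> nat) multiset) pmf" where
  "Afrak L D c F i = bind_pmf L (\<lambda>\<tau>. map_pmf (\<lambda>a. (\<tau>, a)) (Achain D c F i \<tau>))"

definition Umeas :: "nat \<Rightarrow> (nat \<times> nat \<Rightarrow> real) measure" where
  "Umeas D = PiM ({1..D} \<times> {1..}) (\<lambda>_. uniform_measure lborel {0..1::real})"

definition gfun :: "nat \<Rightarrow> (nat \<Rightarrow> nat) \<Rightarrow> nat \<Rightarrow> (nat \<Rightarrow> real) \<Rightarrow> nat
    \<Rightarrow> (nat \<times> nat \<Rightarrow> nat) \<Rightarrow> (nat \<times> nat \<Rightarrow> real) \<Rightarrow> real" where
  "gfun D F i x \<tau> a u = (1 / real (F \<tau>)) *
      (\<Sum>j\<in>{1..D}. \<Sum>\<^sub>\<infinity>m\<in>{1..}. real (a (j, m)) * (if u (j, m) \<le> x j then 1 else 0)) - x i"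

definition eucl_dist :: "nat \<Rightarrow> (nat \<Rightarrow> real) \<Rightarrow> (nat \<Rightarrow> real) \<Rightarrow> real" where
  "eucl_dist D x z = sqrt (\<Sum>j\<in>{1..D}. (x j - z j)^2)"

end

theory Submission
  imports Defs
begin

lemma size_picks: "N \<in> set_pmf (picks M n) \<Longrightarrow> size N = n"
  by (induction n arbitrary: N) auto

lemma card_UN_fam:
  assumes "finite S" "\<And>j. finite (B j)"
  shows "card (\<Union>j\<in>S. {j} \<times> B j) = (\<Sum>j\<in>S. card (B j))"
  using assms
  by (subst card_UN_disjoint) (auto simp: card_cartesian_product_singleton)

lemma size_famproc:
  assumes i: "i \<in> {1..D}"
    and cs: "(\<Sum>j\<in>{1..D} - {i}. c i j) = (\<Sum>j\<in>{1..D} - {i}. c j i)"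
    and F: "\<forall>n\<ge>1. csum D c i \<le> F n"
  shows "a \<in> set_pmf (famproc D c F i k) \<Longrightarrow> size a = F (k+1)"
proof (induction k arbitrary: a)
  case 0
  have "size (init_state D c F i) = F 1 - csum D c i + (\<Sum>j\<in>{1..D} - {i}. c j i)"
    unfolding init_state_def by (simp add: card_UN_fam)
  also have "\<dots> = F 1" using cs F by (simp add: csum_def)
  finally show ?case using 0 by simp
next
  case (Suc k)
  then obtain b where b: "b \<in> set_pmf (famproc D c F i k)"
    and a: "a \<in> set_pmf (step D c F i (Suc k) b)" by auto
  then obtain N where N: "N \<in> set_pmf (picks b (F (Suc k + 1) - csum D c i))"
    and aN: "a = N + new_families D c i (Suc k)" unfolding step_def by auto
  have "size (new_families D c i (Suc k)) = (\<Sum>j\<in>{1..D} - {i}. c j i)"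
    unfolding new_families_def by (simp add: card_UN_fam)
  then have "size a = F (Suc k + 1) - csum D c i + csum D c i"
    using aN size_picks[OF N] cs by (simp add: csum_def)
  also have "\<dots> = F (Suc k + 1)" using F by simp
  finally show ?case .
qed


lemma prob_unif: "prob_space (uniform_measure lborel {0..1::real})"
  by (rule prob_space_uniform_measure) auto

lemma prob_U: "prob_space (Umeas D)"
  unfolding Umeas_def by (rule prob_space_PiM) (rule prob_unif)

lemma int_ind:
  assumes jm: "(j,m) \<in> {1..D} \<times> {1..}" and lo: "0 \<le> lo" "lo \<le> hi" "hi \<le> 1"
  shows "(\<integral>\<^sup>+u. (indicator {lo<..hi} (u (j,m)) :: ennreal) \<partial>Umeas D) = ennreal (hi - lo)"
proof -
  let ?M = "uniform_measure lborel {0..1::real}"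
  have d: "distr (Umeas D) ?M (\<lambda>\<omega>. \<omega> (j,m)) = ?M"
    unfolding Umeas_def using jm by (intro distr_PiM_component prob_unif) auto
  have meas: "(\<lambda>\<omega>. \<omega> (j,m)) \<in> measurable (Umeas D) ?M"
    unfolding Umeas_def using jm by (intro measurable_component_singleton) auto
  have "(\<integral>\<^sup>+u. (indicator {lo<..hi} (u (j,m)) :: ennreal) \<partial>Umeas D)
      = (\<integral>\<^sup>+y. (indicator {lo<..hi} y :: ennreal) \<partial>distr (Umeas D) ?M (\<lambda>\<omega>. \<omega> (j,m)))"
    by (subst nn_integral_distr[OF meas]) (auto simp: d)
  also have "\<dots> = (\<integral>\<^sup>+y. (indicator {lo<..hi} y :: ennreal) \<partial>?M)" by (simp add: d)
  also have "\<dots> = (\<integral>\<^sup>+y. (indicator {lo<..hi} y :: ennreal) * indicator {0..1} y \<partial>lborel) / emeasure lborel {0..1::real}"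
    by (rule nn_integral_uniform_measure) auto
  also have "(\<lambda>y. (indicator {lo<..hi} y :: ennreal) * indicator {0..1} y) = indicator {lo<..hi}"
    using lo by (auto simp: indicator_def fun_eq_iff)
  also have "(\<integral>\<^sup>+y. indicator {lo<..hi} y \<partial>lborel) = ennreal (hi - lo)"
    using lo by simp
  finally show ?thesis by (simp add: divide_ennreal_def)
qed


lemma sum_count_le:
  "(\<Sum>m\<in>{m. m \<ge> 1 \<and> count a (j,m) \<noteq> 0}. count a (j,m)) \<le> size a"
proof -
  let ?S = "{m. m \<ge> 1 \<and> count a (j,m) \<noteq> 0}"
  have "(\<Sum>m\<in>?S. count a (j,m)) = (\<Sum>p\<in>Pair j ` ?S. count a p)"
    by (subst sum.reindex) (auto simp: inj_on_def)
  also have "\<dots> \<le> (\<Sum>p\<in>set_mset a. count a p)"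
    by (rule sum_mono2) auto
  also have "\<dots> = size a" by (simp add: size_multiset_overloaded_eq)
  finally show ?thesis .
qed

lemma finite_S: "finite {m. m \<ge> 1 \<and> count a (j,m) \<noteq> 0}"
proof -
  have "{m. m \<ge> 1 \<and> count a (j,m) \<noteq> 0} \<subseteq> snd ` set_mset a"
    by (force simp: image_iff)
  then show ?thesis by (rule finite_subset) simp
qed

lemma infsum_to_sum:
  "(\<Sum>\<^sub>\<infinity>m\<in>{1..}. real (count a (j, m)) * (if u (j, m) \<le> (y::real) then 1 else 0))
   = (\<Sum>m\<in>{m. m \<ge> 1 \<and> count a (j,m) \<noteq> 0}. real (count a (j, m)) * (if u (j, m) \<le> y then 1 else 0))"
proof -
  have "(\<Sum>\<^sub>\<infinity>m\<in>{1..}. real (count a (j, m)) * (if u (j, m) \<le> (y::real) then 1 else 0))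
   = (\<Sum>\<^sub>\<infinity>m\<in>{m. m \<ge> 1 \<and> count a (j,m) \<noteq> 0}. real (count a (j, m)) * (if u (j, m) \<le> y then 1 else 0))"
    by (rule infsum_cong_neutral) (auto simp: count_eq_zero_iff)
  then show ?thesis using finite_S[of a j] by (simp del: mem_Collect_eq)
qed


lemma ind_diff:
  "\<bar>(if y \<le> (zj::real) then 1 else 0) - (if y \<le> xj then 1 else (0::real))\<bar>
    = indicator {min xj zj<..max xj zj} y"
  by (auto simp: indicator_def)

lemma pointwise:
  fixes x z :: "nat \<Rightarrow> real"
  shows "\<bar>gfun D F i z \<tau> (count a) u - gfun D F i x \<tau> (count a) u\<bar> \<le> \<bar>z i - x i\<bar> +
    (\<Sum>j\<in>{1..D}. \<Sum>m\<in>{m. m \<ge> 1 \<and> count a (j,m) \<noteq> 0}.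
       real (count a (j,m)) / real (F \<tau>) * indicator {min (x j) (z j)<..max (x j) (z j)} (u (j,m)))"
proof -
  define S where "S j = {m. m \<ge> 1 \<and> count a (j,m) \<noteq> 0}" for j
  define cz where "cz j m = real (count a (j, m)) * (if u (j, m) \<le> z j then 1 else 0)" for j m
  define cx where "cx j m = real (count a (j, m)) * (if u (j, m) \<le> x j then 1 else 0)" for j m
  have g: "gfun D F i y \<tau> (count a) u = (1 / real (F \<tau>)) *
      (\<Sum>j\<in>{1..D}. \<Sum>m\<in>S j. real (count a (j, m)) * (if u (j, m) \<le> y j then 1 else 0)) - y i" for y
    unfolding gfun_def S_def infsum_to_sum by simp
  have "gfun D F i z \<tau> (count a) u - gfun D F i x \<tau> (count a) u
     = (1 / real (F \<tau>)) * (\<Sum>j\<in>{1..D}. \<Sum>m\<in>S j. cz j m - cx j m) - (z i - x i)"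
    unfolding g cz_def cx_def by (simp add: sum_subtractf algebra_simps)
  also have "\<bar>\<dots>\<bar> \<le> \<bar>(1 / real (F \<tau>)) * (\<Sum>j\<in>{1..D}. \<Sum>m\<in>S j. cz j m - cx j m)\<bar> + \<bar>z i - x i\<bar>"
    by (rule abs_triangle_ineq4)
  also have "\<bar>(1 / real (F \<tau>)) * (\<Sum>j\<in>{1..D}. \<Sum>m\<in>S j. cz j m - cx j m)\<bar>
      = (1 / real (F \<tau>)) * \<bar>\<Sum>j\<in>{1..D}. \<Sum>m\<in>S j. cz j m - cx j m\<bar>"
    by (simp add: abs_mult)
  also have "\<bar>\<Sum>j\<in>{1..D}. \<Sum>m\<in>S j. cz j m - cx j m\<bar> \<le> (\<Sum>j\<in>{1..D}. \<Sum>m\<in>S j. \<bar>cz j m - cx j m\<bar>)"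
    by (rule order_trans[OF sum_abs sum_mono]) (rule sum_abs)
  also have "(\<Sum>j\<in>{1..D}. \<Sum>m\<in>S j. \<bar>cz j m - cx j m\<bar>) =
     (\<Sum>j\<in>{1..D}. \<Sum>m\<in>S j. real (count a (j,m)) * indicator {min (x j) (z j)<..max (x j) (z j)} (u (j,m)))"
    unfolding cz_def cx_def
    by (intro sum.cong refl) (simp add: right_diff_distrib[symmetric] abs_mult ind_diff)
  finally have "\<bar>gfun D F i z \<tau> (count a) u - gfun D F i x \<tau> (count a) u\<bar> \<le>
     (1 / real (F \<tau>)) * (\<Sum>j\<in>{1..D}. \<Sum>m\<in>S j. real (count a (j,m)) * indicator {min (x j) (z j)<..max (x j) (z j)} (u (j,m))) + \<bar>z i - x i\<bar>"
    by (simp add: divide_right_mono)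
  then show ?thesis
    unfolding S_def by (simp add: sum_distrib_left algebra_simps)
qed


lemma dist_ge:
  assumes "j \<in> {1..D}" shows "\<bar>z j - x j\<bar> \<le> eucl_dist D x z"
proof -
  have "(x j - z j)^2 \<le> (\<Sum>j\<in>{1..D}. (x j - z j)^2)"
    using assms by (intro member_le_sum) auto
  then have "sqrt ((x j - z j)^2) \<le> eucl_dist D x z"
    unfolding eucl_dist_def by (rule real_sqrt_le_mono)
  then show ?thesis by simp
qed

lemma dist_nonneg: "0 \<le> eucl_dist D x z"
  unfolding eucl_dist_def by (simp add: sum_nonneg)

theorem lemmaA1:
  fixes D :: nat and c :: "nat \<Rightarrow> nat \<Rightarrow> nat" and F :: "nat \<Rightarrow> nat" and L :: "nat pmf"
  assumes "D \<ge> 1"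
    and "\<forall>i\<in>{1..D}. (\<Sum>j\<in>{1..D} - {i}. c i j) = (\<Sum>j\<in>{1..D} - {i}. c j i)"
    and "set_pmf L \<subseteq> {1..}"
    and "\<forall>n\<ge>1. F n \<ge> 1"
    and "\<forall>n\<ge>1. \<forall>i\<in>{1..D}. csum D c i \<le> F n"
  shows "\<exists>K::real. \<forall>x z. (\<forall>j\<in>{1..D}. x j \<in> {0..1} \<and> z j \<in> {0..1}) \<longrightarrow>
           (\<forall>i\<in>{1..D}.
             (\<integral>\<^sup>+ ((\<tau>, a), u). ennreal \<bar>gfun D F i z \<tau> (count a) u - gfun D F i x \<tau> (count a) u\<bar>
                 \<partial>(measure_pmf (Afrak L D c F i) \<Otimes>\<^sub>M Umeas D))
             \<le> ennreal (K * eucl_dist D x z))"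
proof (intro exI[of _ "real D + 1"] allI impI ballI)
  fix x z :: "nat \<Rightarrow> real" and i :: nat
  assume xz: "\<forall>j\<in>{1..D}. x j \<in> {0..1} \<and> z j \<in> {0..1}" and i: "i \<in> {1..D}"
  define lo where "lo j = min (x j) (z j)" for j
  define hi where "hi j = max (x j) (z j)" for j
  define S where "S a j = {m::nat. m \<ge> 1 \<and> count a (j,m) \<noteq> 0}" for a :: "(nat \<times> nat) multiset" and j :: nat
  define T where "T j m t u = (if m \<ge> 1 then ennreal (real (count (snd t) (j,m)) / real (F (fst t)))
      * (indicator {lo j<..hi j} (u (j,m)) :: ennreal) else 0)"
    for j m and t :: "nat \<times> (nat \<times> nat) multiset" and u :: "nat \<times> nat \<Rightarrow> real"
  define h where "h p = ennreal \<bar>z i - x i\<bar> + (\<Sum>j\<in>{1..D}. \<Sum>m. T j m (fst p) (snd p))" for p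
  define A where "A = measure_pmf (Afrak L D c F i)"
  define U where "U = Umeas D"
  define dd where "dd = eucl_dist D x z"
  have finS: "finite (S a j)" for a j unfolding S_def by (rule finite_S)
  have Tsum: "(\<Sum>m. T j m t u) = ennreal (\<Sum>m\<in>S (snd t) j.
       real (count (snd t) (j,m)) / real (F (fst t)) * indicator {lo j<..hi j} (u (j,m)))" for j t u
  proof -
    have "(\<Sum>m. T j m t u) = (\<Sum>m\<in>S (snd t) j. T j m t u)"
      by (rule suminf_finite[OF finS]) (auto simp: T_def S_def)
    also have "\<dots> = (\<Sum>m\<in>S (snd t) j. ennreal (real (count (snd t) (j,m)) / real (F (fst t)) * indicator {lo j<..hi j} (u (j,m))))"
      by (intro sum.cong refl) (auto simp: T_def S_def ennreal_mult' indicator_def)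
    also have "\<dots> = ennreal (\<Sum>m\<in>S (snd t) j.
       real (count (snd t) (j,m)) / real (F (fst t)) * indicator {lo j<..hi j} (u (j,m)))"
      by (rule sum_ennreal) auto
    finally show ?thesis .
  qed
  have step1: "(\<integral>\<^sup>+ ((\<tau>, a), u). ennreal \<bar>gfun D F i z \<tau> (count a) u - gfun D F i x \<tau> (count a) u\<bar> \<partial>(A \<Otimes>\<^sub>M U))
      \<le> (\<integral>\<^sup>+ p. h p \<partial>(A \<Otimes>\<^sub>M U))"
  proof (rule nn_integral_mono, clarify)
    fix \<tau> a u
    have "ennreal \<bar>gfun D F i z \<tau> (count a) u - gfun D F i x \<tau> (count a) u\<bar> \<le>
        ennreal (\<bar>z i - x i\<bar> + (\<Sum>j\<in>{1..D}. \<Sum>m\<in>S a j.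
       real (count a (j,m)) / real (F \<tau>) * indicator {lo j<..hi j} (u (j,m))))"
      unfolding S_def lo_def hi_def by (rule ennreal_leI) (rule pointwise)
    also have "\<dots> = h ((\<tau>, a), u)"
      unfolding h_def Tsum
      by (subst ennreal_plus, simp, rule sum_nonneg, auto intro!: sum_nonneg, subst sum_ennreal, auto intro!: sum_nonneg)
    finally show "ennreal \<bar>gfun D F i z \<tau> (count a) u - gfun D F i x \<tau> (count a) u\<bar> \<le> h ((\<tau>, a), u)" .
  qed
  have compm: "(\<lambda>u. u (j,m)) \<in> borel_measurable U" if "j \<in> {1..D}" "m \<ge> 1" for j m
  proof -
    have "(\<lambda>u. u (j,m)) \<in> measurable U (uniform_measure lborel {0..1::real})"
      unfolding U_def Umeas_def using that by (intro measurable_component_singleton) auto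
    then show ?thesis
      by (subst (asm) measurable_cong_sets[OF refl, where N="uniform_measure lborel {0..1::real}" and N'=borel]) auto
  qed
  have Tu: "(\<lambda>u. T j m t u) \<in> borel_measurable U" if "j \<in> {1..D}" for j m t
  proof (cases "m \<ge> 1")
    case True
    have "(\<lambda>u. (indicator {lo j<..hi j} (u (j,m)) :: ennreal)) \<in> borel_measurable U"
      by (rule measurable_compose[OF compm[OF that True]]) simp
    then show ?thesis unfolding T_def using True by simp
  qed (simp add: T_def)
  have Tm: "(\<lambda>p. T j m (fst p) (snd p)) \<in> borel_measurable (A \<Otimes>\<^sub>M U)" if "j \<in> {1..D}" for j m
  proof (cases "m \<ge> 1")
    case True
    have "(\<lambda>u. (indicator {lo j<..hi j} (u (j,m)) :: ennreal)) \<in> borel_measurable U"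
      by (rule measurable_compose[OF compm[OF that True]]) simp
    then have 1: "(\<lambda>p. (indicator {lo j<..hi j} (snd p (j,m)) :: ennreal)) \<in> borel_measurable (A \<Otimes>\<^sub>M U)"
      by (rule measurable_compose[OF measurable_snd])
    have 2: "(\<lambda>p. ennreal (real (count (snd (fst p)) (j,m)) / real (F (fst (fst p))))) \<in> borel_measurable (A \<Otimes>\<^sub>M U)"
      by (rule measurable_compose[OF measurable_fst]) (simp add: A_def)
    show ?thesis unfolding T_def using True 1 2 by simp
  qed (simp add: T_def)
  have hm: "h \<in> borel_measurable (A \<Otimes>\<^sub>M U)"
    unfolding h_def
    by (intro borel_measurable_add borel_measurable_sum borel_measurable_suminf_order Tm measurable_const) auto
  interpret pU: prob_space U by (simp add: U_def prob_U)
  have step2: "(\<integral>\<^sup>+ p. h p \<partial>(A \<Otimes>\<^sub>M U)) = (\<integral>\<^sup>+ t. (\<integral>\<^sup>+ u. h (t, u) \<partial>U) \<partial>A)"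
    by (rule pU.nn_integral_fst[OF hm, symmetric])
  have inner: "(\<integral>\<^sup>+ u. h (t, u) \<partial>U) \<le> ennreal ((real D + 1) * dd)" if t: "t \<in> set_pmf (Afrak L D c F i)" for t
  proof -
    obtain \<tau> a where ta: "t = (\<tau>, a)" by (cases t)
    from t have tau: "\<tau> \<in> set_pmf L" and a: "a \<in> set_pmf (famproc D c F i (\<tau> - 1))"
      unfolding ta Afrak_def Achain_def by auto
    have tau1: "\<tau> \<ge> 1" using tau assms(3) by auto
    have sz: "size a = F \<tau>"
      using size_famproc[OF i _ _ a] assms(2,5) i tau1 by auto
    have Fpos: "real (F \<tau>) > 0" using assms(4) tau1 by auto
    have intT: "(\<integral>\<^sup>+ u. T j m t u \<partial>U) = (if m \<ge> 1 then ennreal (real (count a (j,m)) / real (F \<tau>)) * ennreal (hi j - lo j) else 0)"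
      if j: "j \<in> {1..D}" for j m
    proof (cases "m \<ge> 1")
      case True
      have "(\<integral>\<^sup>+ u. T j m t u \<partial>U) = ennreal (real (count a (j,m)) / real (F \<tau>)) * (\<integral>\<^sup>+ u. (indicator {lo j<..hi j} (u (j,m)) :: ennreal) \<partial>U)"
        unfolding T_def ta using True
        by (simp add: nn_integral_cmult measurable_compose[OF compm[OF j True]])
      also have "(\<integral>\<^sup>+ u. (indicator {lo j<..hi j} (u (j,m)) :: ennreal) \<partial>U) = ennreal (hi j - lo j)"
        unfolding U_def using j True xz by (intro int_ind) (auto simp: lo_def hi_def)
      finally show ?thesis using True by simp
    qed (simp add: T_def)
    have jb: "(\<Sum>m. \<integral>\<^sup>+ u. T j m t u \<partial>U) \<le> ennreal dd" if j: "j \<in> {1..D}" for j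
    proof -
      have "(\<Sum>m. \<integral>\<^sup>+ u. T j m t u \<partial>U) = (\<Sum>m\<in>S a j. \<integral>\<^sup>+ u. T j m t u \<partial>U)"
        by (rule suminf_finite[OF finS]) (auto simp: intT[OF j] S_def)
      also have "\<dots> = (\<Sum>m\<in>S a j. ennreal (real (count a (j,m)) / real (F \<tau>) * (hi j - lo j)))"
        by (intro sum.cong refl) (auto simp: intT[OF j] S_def lo_def hi_def ennreal_mult[symmetric])
      also have "\<dots> = ennreal (\<Sum>m\<in>S a j. real (count a (j,m)) / real (F \<tau>) * (hi j - lo j))"
        by (rule sum_ennreal) (auto simp: lo_def hi_def)
      also have "(\<Sum>m\<in>S a j. real (count a (j,m)) / real (F \<tau>) * (hi j - lo j))
          = (real (\<Sum>m\<in>S a j. count a (j,m)) / real (F \<tau>)) * (hi j - lo j)"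
        by (simp add: sum_distrib_right sum_divide_distrib)
      also have "\<dots> \<le> 1 * (hi j - lo j)"
      proof (rule mult_right_mono)
        have "(\<Sum>m\<in>S a j. count a (j,m)) \<le> F \<tau>"
          using sum_count_le[of a j] sz unfolding S_def by simp
        then have "real (\<Sum>m\<in>S a j. count a (j,m)) \<le> real (F \<tau>)"
          by (simp only: of_nat_le_iff)
        then show "real (\<Sum>m\<in>S a j. count a (j,m)) / real (F \<tau>) \<le> 1"
          using Fpos by simp
      qed (auto simp: lo_def hi_def)
      also have "\<dots> \<le> dd" using dist_ge[OF j, of z x] unfolding dd_def lo_def hi_def by auto
      finally show ?thesis by (simp add: ennreal_leI)
    qed
    have "(\<integral>\<^sup>+ u. h (t, u) \<partial>U) = ennreal \<bar>z i - x i\<bar> + (\<Sum>j\<in>{1..D}. \<integral>\<^sup>+ u. (\<Sum>m. T j m t u) \<partial>U)"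
      unfolding h_def
      apply (simp only: fst_conv snd_conv)
      apply (subst nn_integral_add)
        apply simp
       apply (rule borel_measurable_sum, rule borel_measurable_suminf_order, rule Tu, simp)
      apply (subst nn_integral_sum)
       apply (rule borel_measurable_suminf_order, rule Tu, simp)
      apply (simp add: pU.emeasure_space_1)
      done
    also have "\<dots> = ennreal \<bar>z i - x i\<bar> + (\<Sum>j\<in>{1..D}. \<Sum>m. \<integral>\<^sup>+ u. T j m t u \<partial>U)"
      by (intro arg_cong2[where f="(+)"] refl sum.cong nn_integral_suminf Tu) auto
    also have "\<dots> \<le> ennreal dd + (\<Sum>j\<in>{1..D}. ennreal dd)"
      by (intro add_mono sum_mono jb ennreal_leI) (auto simp: dd_def intro!: dist_ge i)
    also have "\<dots> = ennreal ((real D + 1) * dd)"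
      using dist_nonneg[of D x z] by (simp add: dd_def ennreal_plus[symmetric] ennreal_mult' algebra_simps ennreal_of_nat_eq_real_of_nat)
    finally show ?thesis .
  qed
  have "(\<integral>\<^sup>+ t. (\<integral>\<^sup>+ u. h (t, u) \<partial>U) \<partial>A) \<le> (\<integral>\<^sup>+ t. ennreal ((real D + 1) * dd) \<partial>A)"
    unfolding A_def by (rule nn_integral_mono_AE) (auto simp: AE_measure_pmf_iff inner)
  also have "\<dots> = ennreal ((real D + 1) * dd)"
    unfolding A_def by (simp add: measure_pmf.emeasure_space_1)
  finally show "(\<integral>\<^sup>+ ((\<tau>, a), u). ennreal \<bar>gfun D F i z \<tau> (count a) u - gfun D F i x \<tau> (count a) u\<bar>
                 \<partial>(measure_pmf (Afrak L D c F i) \<Otimes>\<^sub>M Umeas D))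
             \<le> ennreal ((real D + 1) * eucl_dist D x z)"
    using step1 step2 unfolding A_def U_def dd_def by simp
qed

end
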